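(* Let $mG$ be a finite canonical misinformation game and let $mG'\in\mathcal{AD}^*(\{mG\})$ satisfy $\mathcal{AD}(\{mG'\})=\{mG'\}$. Then $NME(mG')\subseteq SME(mG)$.
   Context: A normal-form game is $G=\langle N,S,P\rangle$ with finite players $N$, finite pure strategy sets $S_i$, positions $S=\times_i S_i$, payoffs $P_i:S\to\mathbb{R}$. A misinformation game $mG=\langle G^0,G^1,\dots,G^{|N|}\rangle$ consists of the actual game $G^0$ and subjective games $G^i$; it is canonical if all $G^i=\langle N,S,P^i\rangle$ differ from $G^0$ only in payoffs and in every $G^i$ all players have equally many pure strategies. $NME(mG)$ is the set of profiles $\sigma=(\sigma_1,\dots,\sigma_{|N|})$ such that each $\sigma_i$ is player $i$'s component of some Nash equilibrium of $G^i$. $\chi(\sigma)=\mathrm{supp}(\sigma_1)\times\dots\times\mathrm{supp}(\sigma_{|N|})$. For $\vec v\in S$, $mG_{\vec v}$ is obtained by replacing, in every $P^i$ ($i\ge1$), the payoff vector at position $\vec v$ by $P^0(\vec v)$. For a set $M$ of misinformation games, $\mathcal{AD}(M)=\{mG_{\vec u}: mG\in M,\sigma\in NME(mG),\vec u\in\chi(\sigma)\}$, $\mathcal{AD}^{(0)}(M)=M$, $\mathcal{AD}^{(t+1)}(M)=\mathcal{AD}^{(t)}(\mathcal{AD}(M))$, $\mathcal{AD}^*(M)=\bigcup_{t\ge0}\mathcal{AD}^{(t)}(M)$; the length $\mathfrak{L}$ is the least $t\ge0$ with $\mathcal{AD}^{(t+1)}(M)=\mathcal{AD}^{(t)}(M)$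 and $\mathcal{AD}^\infty(M)=\mathcal{AD}^{(\mathfrak{L})}(M)$. A profile $\sigma$ is a stable misinformed equilibrium of $mG$ if there is $\widehat{mG}\in\mathcal{AD}^\infty(\{mG\})$ with $\sigma\in NME(\widehat{mG})$ and $\widehat{mG}_{\vec v}=\widehat{mG}$ for all $\vec v\in\chi(\sigma)$; $SME(mG)$ is the set of these. *)

theory Defs
  imports Complex_Main "HOL-Library.FuncSet"
begin

text \<open>All games G^0, G^1, ..., G^n share the pure strategy sets S i (canonical), so a
misinformation game is given by the actual payoff function P^0 and, for every
player i, the subjective payoff function P^i.\<close>

type_synonym ('n, 's) payoff = "('n \<Rightarrow> 's) \<Rightarrow> 'n \<Rightarrow> real"
type_synonym ('n, 's) mgame = "('n, 's) payoff \<times> ('n \<Rightarrow> ('n, 's) payoff)"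

definition positions :: "('n \<Rightarrow> 's set) \<Rightarrow> ('n \<Rightarrow> 's) set" where
  "positions S = Pi UNIV S"

definition canonical :: "('n::finite \<Rightarrow> 's set) \<Rightarrow> bool" where
  "canonical S \<longleftrightarrow> (\<forall>i. finite (S i) \<and> S i \<noteq> {}) \<and> (\<forall>i j. card (S i) = card (S j))"

definition mixed :: "('n \<Rightarrow> 's set) \<Rightarrow> 'n \<Rightarrow> ('s \<Rightarrow> real) \<Rightarrow> bool" where
  "mixed S i t \<longleftrightarrow> (\<forall>s. 0 \<le> t s) \<and> (\<forall>s. s \<notin> S i \<longrightarrow> t s = 0) \<and> sum t (S i) = 1"

definition EU :: "('n::finite \<Rightarrow> 's set) \<Rightarrow> ('n, 's) payoff \<Rightarrow> ('n \<Rightarrow> 's \<Rightarrow> real) \<Rightarrow> 'n \<Rightarrow> real" where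
  "EU S P \<sigma> i = (\<Sum>v\<in>positions S. (\<Prod>j\<in>UNIV. \<sigma> j (v j)) * P v i)"

definition nash :: "('n::finite \<Rightarrow> 's set) \<Rightarrow> ('n, 's) payoff \<Rightarrow> ('n \<Rightarrow> 's \<Rightarrow> real) \<Rightarrow> bool" where
  "nash S P \<sigma> \<longleftrightarrow> (\<forall>i. mixed S i (\<sigma> i)) \<and>
     (\<forall>i t. mixed S i t \<longrightarrow> EU S P (\<sigma>(i := t)) i \<le> EU S P \<sigma> i)"

definition NME :: "('n::finite \<Rightarrow> 's set) \<Rightarrow> ('n, 's) mgame \<Rightarrow> ('n \<Rightarrow> 's \<Rightarrow> real) set" where
  "NME S mG = {\<sigma>. \<forall>i. \<exists>\<tau>. nash S (snd mG i) \<tau> \<and> \<sigma> i = \<tau> i}"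

definition supp :: "('s \<Rightarrow> real) \<Rightarrow> 's set" where
  "supp t = {s. t s \<noteq> 0}"

definition chi :: "('n \<Rightarrow> 's \<Rightarrow> real) \<Rightarrow> ('n \<Rightarrow> 's) set" where
  "chi \<sigma> = {v. \<forall>i. v i \<in> supp (\<sigma> i)}"

definition upd :: "('n, 's) mgame \<Rightarrow> ('n \<Rightarrow> 's) \<Rightarrow> ('n, 's) mgame" where
  "upd mG v = (fst mG, \<lambda>i w. if w = v then fst mG v else snd mG i w)"

definition AD :: "('n::finite \<Rightarrow> 's set) \<Rightarrow> ('n, 's) mgame set \<Rightarrow> ('n, 's) mgame set" where
  "AD S M = {upd mG u | mG \<sigma> u. mG \<in> M \<and> \<sigma> \<in> NME S mG \<and> u \<in> chi \<sigma>}"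

definition ADstar :: "('n::finite \<Rightarrow> 's set) \<Rightarrow> ('n, 's) mgame set \<Rightarrow> ('n, 's) mgame set" where
  "ADstar S M = (\<Union>t. (AD S ^^ t) M)"

definition ADlength :: "('n::finite \<Rightarrow> 's set) \<Rightarrow> ('n, 's) mgame set \<Rightarrow> nat" where
  "ADlength S M = (LEAST t. (AD S ^^ Suc t) M = (AD S ^^ t) M)"

definition ADinf :: "('n::finite \<Rightarrow> 's set) \<Rightarrow> ('n, 's) mgame set \<Rightarrow> ('n, 's) mgame set" where
  "ADinf S M = (AD S ^^ ADlength S M) M"

definition SME :: "('n::finite \<Rightarrow> 's set) \<Rightarrow> ('n, 's) mgame \<Rightarrow> ('n \<Rightarrow> 's \<Rightarrow> real) set" where
  "SME S mG = {\<sigma>. \<exists>g\<in>ADinf S {mG}. \<sigma> \<in> NME S g \<and> (\<forall>v\<in>chi \<sigma>. upd g v = g)}"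

end

theory Submission
  imports Defs
begin

lemma funpow_distrib:
  fixes succ :: "'a \<Rightarrow> 'a set"
  shows "((\<lambda>A. \<Union>x\<in>A. succ x)^^s) A = (\<Union>a\<in>A. ((\<lambda>A. \<Union>x\<in>A. succ x)^^s) {a})"
proof (induction s arbitrary: A)
  case 0 then show ?case by simp
next
  case (Suc s)
  show ?case by (subst (1 2) funpow_Suc_right, simp add: Suc[of "\<Union>x\<in>A. succ x"] Suc[of "succ _"])
qed

lemma stab:
  fixes succ :: "'a \<Rightarrow> 'a set" and \<mu> :: "'a \<Rightarrow> nat"
  assumes dec: "\<And>x y. y \<in> succ x \<Longrightarrow> y \<noteq> x \<Longrightarrow> \<mu> y < \<mu> x"
  shows "\<mu> x < t \<Longrightarrow> ((\<lambda>A. \<Union>x\<in>A. succ x)^^Suc t) {x} = ((\<lambda>A. \<Union>x\<in>A. succ x)^^t) {x}"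
proof (induction "\<mu> x" arbitrary: x t rule: less_induct)
  case less
  let ?F = "\<lambda>A. \<Union>x\<in>A. succ x"
  define H where "H = succ x - {x}"
  define X where "X s = (\<Union>h\<in>H. (?F^^s) {h})" for s
  have X: "X (Suc s) = X s" if "\<mu> x \<le> s" for s
  proof -
    have "(?F^^Suc s) {h} = (?F^^s) {h}" if "h \<in> H" for h
      using less(1)[of h s] dec[of h x] that \<open>\<mu> x \<le> s\<close> H_def by force
    then show ?thesis unfolding X_def by auto
  qed
  have step: "(?F^^Suc s) {x} = X s \<union> (if x \<in> succ x then (?F^^s) {x} else {})" for s
  proof -
    have "(?F^^Suc s) {x} = (?F^^s) (succ x)" by (subst funpow_Suc_right) simp
    also have "\<dots> = (\<Union>a\<in>succ x. (?F^^s) {a})" by (rule funpow_distrib)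
    finally show ?thesis unfolding X_def H_def by auto
  qed
  obtain t' where t': "t = Suc t'" using less(2) by (cases t) auto
  have mt: "\<mu> x \<le> t'" using less(2) t' by simp
  show ?case
  proof (cases "x \<in> succ x")
    case False
    have a: "(?F^^Suc t) {x} = X t" using step[of t] False by (simp only: if_False Un_empty_right)
    have b: "(?F^^t) {x} = X t'" using step[of t'] False t' by (simp only: if_False Un_empty_right)
    show ?thesis using a b X[OF mt] t' by (simp only:)
  next
    case True
    have a: "(?F^^Suc t) {x} = X t \<union> (?F^^t) {x}" using step[of t] True by (simp only: if_True)
    have b: "(?F^^t) {x} = X t' \<union> (?F^^t') {x}" using step[of t'] True t' by (simp only: if_True)
    have "X t = X t'" using X[OF mt] t' by (simp only:)
    then show ?thesis using a b by blast
  qed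
qed

lemma stays:
  fixes succ :: "'a \<Rightarrow> 'a set"
  assumes "x \<in> succ x" "x \<in> ((\<lambda>A. \<Union>x\<in>A. succ x)^^t) M"
  shows "x \<in> ((\<lambda>A. \<Union>x\<in>A. succ x)^^(t + k)) M"
  using assms by (induction k) auto

lemma AD_eq: "AD S = (\<lambda>A. \<Union>g\<in>A. AD S {g})"
  unfolding AD_def by (rule ext) blast

lemma chi_pos:
  assumes "\<sigma> \<in> NME S g" "u \<in> chi \<sigma>"
  shows "u \<in> positions S"
proof -
  have "u i \<in> S i" for i
  proof -
    obtain \<tau> where "nash S (snd g i) \<tau>" "\<sigma> i = \<tau> i" using assms(1) unfolding NME_def by blast
    then have "mixed S i (\<sigma> i)" unfolding nash_def by auto
    moreover have "\<sigma> i (u i) \<noteq> 0" using assms(2) unfolding chi_def supp_def by auto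
    ultimately show ?thesis unfolding mixed_def by auto
  qed
  then show ?thesis unfolding positions_def by auto
qed

definition mu :: "('n::finite \<Rightarrow> 's set) \<Rightarrow> ('n, 's) mgame \<Rightarrow> nat" where
  "mu S g = card {(i, w). w \<in> positions S \<and> snd g i w \<noteq> fst g w}"

theorem proposition14:
  fixes S :: "'n::finite \<Rightarrow> 's set" and mG mG' :: "('n, 's) mgame"
  assumes "canonical S"
    and "mG' \<in> ADstar S {mG}"
    and "AD S {mG'} = {mG'}"
  shows "NME S mG' \<subseteq> SME S mG"
proof -
  let ?succ = "\<lambda>g. AD S {g}"
  have fin: "finite (positions S)"
  proof -
    have "finite (PiE UNIV S)" using assms(1) unfolding canonical_def by (intro finite_PiE) auto
    then show ?thesis unfolding positions_def by (simp add: PiE_UNIV_domain)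
  qed
  have dec: "mu S y < mu S x" if yx: "y \<in> ?succ x" "y \<noteq> x" for x y
  proof -
    obtain \<sigma> u where su: "\<sigma> \<in> NME S x" "u \<in> chi \<sigma>" "y = upd x u"
      using yx(1) unfolding AD_def by auto
    have up: "u \<in> positions S" using chi_pos su by blast
    have "\<exists>i. snd x i u \<noteq> fst x u"
    proof (rule ccontr)
      assume "\<not> ?thesis"
      then have "upd x u = x" unfolding upd_def by (cases x) (auto intro!: ext)
      then show False using yx su(3) by simp
    qed
    then obtain i where i: "snd x i u \<noteq> fst x u" by blast
    let ?A = "{(i, w). w \<in> positions S \<and> snd x i w \<noteq> fst x w}"
    let ?B = "{(i, w). w \<in> positions S \<and> snd y i w \<noteq> fst y w}"
    have "?A \<subseteq> UNIV \<times> positions S" by auto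
    then have finA: "finite ?A" using fin by (meson finite_SigmaI finite rev_finite_subset)
    have "?B \<subseteq> ?A" using su(3) by (auto simp: upd_def split: if_splits)
    moreover have "(i, u) \<in> ?A - ?B" using su(3) i up by (auto simp: upd_def)
    ultimately have "?B \<subset> ?A" by blast
    then show ?thesis unfolding mu_def using psubset_card_mono[OF finA] by simp
  qed
  note AD_eq' = AD_eq[of S]
  have st: "\<And>x t. mu S x < t \<Longrightarrow> (AD S^^Suc t) {x} = (AD S^^t) {x}"
    using stab[of ?succ "mu S", OF dec] by (subst (1 2) AD_eq') blast
  define L where "L = ADlength S {mG}"
  have L: "(AD S^^Suc L) {mG} = (AD S^^L) {mG}"
    unfolding L_def ADlength_def by (rule LeastI, rule st[of mG "Suc (mu S mG)"]) simp
  have Lk: "(AD S^^(L + k)) {mG} = (AD S^^L) {mG}" for k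
    by (induction k) (use L in \<open>simp_all add: funpow_swap1\<close>)
  obtain t where t: "mG' \<in> (AD S^^t) {mG}" using assms(2) unfolding ADstar_def by blast
  have "mG' \<in> (AD S^^(t + L)) {mG}"
  proof -
    have h: "(\<lambda>A. \<Union>x\<in>A. AD S {x}) = AD S" using AD_eq' by simp
    show ?thesis using stays[of mG' ?succ t "{mG}" L] assms(3) t unfolding h by auto
  qed
  then have inf: "mG' \<in> ADinf S {mG}"
    unfolding ADinf_def L_def[symmetric] using Lk[of t] by (simp add: add.commute)
  show ?thesis
  proof
    fix \<sigma> assume s: "\<sigma> \<in> NME S mG'"
    have "\<forall>v\<in>chi \<sigma>. upd mG' v = mG'"
    proof
      fix v assume "v \<in> chi \<sigma>"
      then have "upd mG' v \<in> AD S {mG'}" unfolding AD_def using s by blast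
      then show "upd mG' v = mG'" using assms(3) by simp
    qed
    then show "\<sigma> \<in> SME S mG" unfolding SME_def using inf s by blast
  qed
qed

end
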